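(* Let $(K,\mathrm{val})$ be a valued field in which every strict unit admits a square root, let $A$ be a subring with $B\subseteq A\subseteq K$, $H=\mathrm{val}(A^\times)$, and let $\mathcal M$ be a quasi-quadratic module in $A$. Then: (1) $M_g^A(\mathcal M)$ is a quasi-quadratic module in $F$ for every $g\in G$; (2) if $g_1,g_2\in H\cup G_{\ge e}$ and $[\![g_1]\!]=[\![g_2]\!]$, then $M_{g_1}^A(\mathcal M)=M_{g_2}^A(\mathcal M)$; (3) if $g_1,g_2\in H\cup G_{\ge e}$, $\overline{g_1}=\overline{g_2}$ and $g_1\le g_2$, then $M_{g_1}^A(\mathcal M)\subseteq M_{g_2}^A(\mathcal M)$.
   Context: Let $(G,\le)$ be a totally ordered abelian group written multiplicatively with identity $e$; $G_{\ge e}=\{g\in G:g\ge e\}$, $G^2=\{g^2:g\in G\}$. Let $(K,\mathrm{val})$ be a valued field with surjective valuation $\mathrm{val}:K\to G\cup\{\infty\}$, valuation ring $B=\{x:\mathrm{val}(x)\ge e\}$, residue map $\pi:B\to F$, residue field $F$. A strict unit is $x\in B^\times$ with $\pi(x)=1$. For a subring $A$ with $B\subseteq A\subseteq K$ put $H=\mathrm{val}(A^\times)$ (a convex subgroup of $G$). For $g\in G$: $\overline g$ is its class in $G/G^2$, $[\![g]\!]$ its class in $G/H^2$. A quasi-quadratic module in a commutative ring $R$ is a subset $M\subseteq R$ with $M+M\subseteq M$ and $a^2M\subseteq M$ for all $a\in R$. A pseudo-angular component map is a map $\mathrm{p.an}:K^\times\to F^\times$ such that: (1) $\mathrm{p.an}(u)=\pi(u)$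 for $u\in B^\times$; (2) $\mathrm{p.an}(ux)=\pi(u)\mathrm{p.an}(x)$ for $u\in B^\times,x\in K^\times$; (3) for all $g\in G$, $c\in F^\times$ there is $w\in K$ with $\mathrm{val}(w)=g$, $\mathrm{p.an}(w)=c$; (4) for nonzero $x_1,x_2$ with $x_1+x_2\ne0$: if $\mathrm{val}(x_1)<\mathrm{val}(x_2)$ then $\mathrm{p.an}(x_1+x_2)=\mathrm{p.an}(x_1)$; if $\mathrm{val}(x_1)=\mathrm{val}(x_2)$ and $\mathrm{p.an}(x_1)+\mathrm{p.an}(x_2)\ne0$ then $\mathrm{val}(x_1+x_2)=\mathrm{val}(x_1)$ and $\mathrm{p.an}(x_1+x_2)=\mathrm{p.an}(x_1)+\mathrm{p.an}(x_2)$; (5) if $x,y\in K^\times$, $\overline{\mathrm{val}(x)}=\overline{\mathrm{val}(y)}$ and $\mathrm{p.an}(x)=\mathrm{p.an}(y)$ then $y=u^2x$ for some $u\in K^\times$; (6) for $a,u\in K^\times$ there is $k\in F^\times$ with $\mathrm{p.an}(au^2)=\mathrm{p.an}(a)k^2$. Such a map exists under the hypotheses; fix one. For a quasi-quadratic module $\mathcal M$ in $A$ and $g\in G$: $$M_g^A(\mathcal M)=\{\mathrm{p.an}(x):\ x\in\mathcal M\setminus\{0\},\ \mathrm{val}(x)=g\}\cup\{0\}\subseteq F.$$ *)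

theory Defs
  imports Main
begin

text \<open>The value group G is written additively: a linearly ordered abelian group
  'g with identity 0 (the paper's e), and g^2 becomes g + g.
  The valuation takes values in 'g option, None playing the role of infinity.\<close>

definition valuation :: "('k::field \<Rightarrow> 'g::linordered_ab_group_add option) \<Rightarrow> bool" where
  "valuation val \<longleftrightarrow>
     (\<forall>x. val x = None \<longleftrightarrow> x = 0) \<and>
     (\<forall>x y. x \<noteq> 0 \<longrightarrow> y \<noteq> 0 \<longrightarrow> val (x * y) = Some (the (val x) + the (val y))) \<and>
     (\<forall>x y. x \<noteq> 0 \<longrightarrow> y \<noteq> 0 \<longrightarrow> x + y \<noteq> 0 \<longrightarrow>
        min (the (val x)) (the (val y)) \<le> the (val (x + y))) \<and>
     (\<forall>g. \<exists>x. val x = Some g)"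

definition vring :: "('k::field \<Rightarrow> 'g::linordered_ab_group_add option) \<Rightarrow> 'k set" where
  "vring val = {x. x = 0 \<or> 0 \<le> the (val x)}"

text \<open>pi is the residue map B -> F: a surjective ring homomorphism on B whose kernel
  is the maximal ideal of B (values outside B are irrelevant).\<close>
definition residue_map ::
  "('k::field \<Rightarrow> 'g::linordered_ab_group_add option) \<Rightarrow> ('k \<Rightarrow> 'f::field) \<Rightarrow> bool" where
  "residue_map val \<pi> \<longleftrightarrow>
     (\<forall>x\<in>vring val. \<forall>y\<in>vring val. \<pi> (x + y) = \<pi> x + \<pi> y \<and> \<pi> (x * y) = \<pi> x * \<pi> y) \<and>
     \<pi> 1 = 1 \<and>
     (\<forall>x\<in>vring val. \<pi> x = 0 \<longleftrightarrow> (x = 0 \<or> 0 < the (val x))) \<and>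
     \<pi> ` vring val = UNIV"

definition strict_unit ::
  "('k::field \<Rightarrow> 'g::linordered_ab_group_add option) \<Rightarrow> ('k \<Rightarrow> 'f::field) \<Rightarrow> 'k \<Rightarrow> bool" where
  "strict_unit val \<pi> x \<longleftrightarrow> val x = Some 0 \<and> \<pi> x = 1"

definition intermediate_ring ::
  "('k::field \<Rightarrow> 'g::linordered_ab_group_add option) \<Rightarrow> 'k set \<Rightarrow> bool" where
  "intermediate_ring val A \<longleftrightarrow>
     vring val \<subseteq> A \<and> 0 \<in> A \<and> 1 \<in> A \<and>
     (\<forall>x\<in>A. \<forall>y\<in>A. x + y \<in> A \<and> x - y \<in> A \<and> x * y \<in> A)"

definition ring_units :: "'k::field set \<Rightarrow> 'k set" where
  "ring_units A = {a \<in> A. a \<noteq> 0 \<and> inverse a \<in> A}"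

definition Hgrp ::
  "('k::field \<Rightarrow> 'g::linordered_ab_group_add option) \<Rightarrow> 'k set \<Rightarrow> 'g set" where
  "Hgrp val A = (\<lambda>a. the (val a)) ` ring_units A"

text \<open>Equality of classes in G/G^2 and in G/H^2.\<close>
definition same_sq_class :: "'g::ab_group_add \<Rightarrow> 'g \<Rightarrow> bool" where
  "same_sq_class g1 g2 \<longleftrightarrow> (\<exists>h. g1 - g2 = h + h)"

definition same_class_mod_sq :: "'g::ab_group_add set \<Rightarrow> 'g \<Rightarrow> 'g \<Rightarrow> bool" where
  "same_class_mod_sq H g1 g2 \<longleftrightarrow> (\<exists>h\<in>H. g1 - g2 = h + h)"

definition qq_module :: "'a::comm_ring_1 set \<Rightarrow> 'a set \<Rightarrow> bool" where
  "qq_module R M \<longleftrightarrow> M \<subseteq> R \<and> (\<forall>x\<in>M. \<forall>y\<in>M. x + y \<in> M) \<and> (\<forall>a\<in>R. \<forall>x\<in>M. a^2 * x \<in> M)"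

definition pseudo_angular ::
  "('k::field \<Rightarrow> 'g::linordered_ab_group_add option) \<Rightarrow> ('k \<Rightarrow> 'f::field) \<Rightarrow> ('k \<Rightarrow> 'f) \<Rightarrow> bool" where
  "pseudo_angular val \<pi> pan \<longleftrightarrow>
     (\<forall>x. x \<noteq> 0 \<longrightarrow> pan x \<noteq> 0) \<and>
     (\<forall>u. val u = Some 0 \<longrightarrow> pan u = \<pi> u) \<and>
     (\<forall>u x. val u = Some 0 \<longrightarrow> x \<noteq> 0 \<longrightarrow> pan (u * x) = \<pi> u * pan x) \<and>
     (\<forall>g c. c \<noteq> 0 \<longrightarrow> (\<exists>w. val w = Some g \<and> pan w = c)) \<and>
     (\<forall>x1 x2. x1 \<noteq> 0 \<longrightarrow> x2 \<noteq> 0 \<longrightarrow> x1 + x2 \<noteq> 0 \<longrightarrow>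
        (the (val x1) < the (val x2) \<longrightarrow> pan (x1 + x2) = pan x1) \<and>
        (val x1 = val x2 \<longrightarrow> pan x1 + pan x2 \<noteq> 0 \<longrightarrow>
           val (x1 + x2) = val x1 \<and> pan (x1 + x2) = pan x1 + pan x2)) \<and>
     (\<forall>x y. x \<noteq> 0 \<longrightarrow> y \<noteq> 0 \<longrightarrow> same_sq_class (the (val x)) (the (val y)) \<longrightarrow>
        pan x = pan y \<longrightarrow> (\<exists>u. u \<noteq> 0 \<and> y = u^2 * x)) \<and>
     (\<forall>a u. a \<noteq> 0 \<longrightarrow> u \<noteq> 0 \<longrightarrow> (\<exists>k. k \<noteq> 0 \<and> pan (a * u^2) = pan a * k^2))"

definition Mg ::
  "('k::field \<Rightarrow> 'g::linordered_ab_group_add option) \<Rightarrow> ('k \<Rightarrow> 'f::field) \<Rightarrow> 'k set \<Rightarrow> 'g \<Rightarrow> 'f set" where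
  "Mg val pan M g = {pan x | x. x \<in> M \<and> x \<noteq> 0 \<and> val x = Some g} \<union> {0}"

end

theory Submission
  imports Defs
begin

lemma v_mult: "valuation val \<Longrightarrow> x \<noteq> 0 \<Longrightarrow> y \<noteq> 0 \<Longrightarrow> val (x*y) = Some (the (val x) + the (val y))"
  unfolding valuation_def by blast

lemma v_some: "valuation val \<Longrightarrow> x \<noteq> 0 \<Longrightarrow> val x = Some (the (val x))"
  unfolding valuation_def by (metis option.collapse)

lemma v_some2: "valuation val \<Longrightarrow> x \<noteq> 0 \<Longrightarrow> the (val x) = g \<Longrightarrow> val x = Some g"
  using v_some by metis

lemma v_zero: "valuation val \<Longrightarrow> (val x = None) = (x = 0)"
  unfolding valuation_def by simp

lemma v_one: assumes "valuation val" shows "val 1 = Some 0"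
proof -
  have a: "val (1*1) = Some (the (val 1) + the (val 1))" by (rule v_mult[OF assms]) simp_all
  have b: "val 1 = Some (the (val 1))" by (intro v_some2[OF assms]) simp_all
  have "Some (the (val 1) + the (val 1)) = Some (the (val 1))" using a b by (simp only: mult_1_left)
  then have "the (val 1) + the (val 1) = the (val 1) + 0" by (simp only: option.inject add_0_right)
  then have "the (val 1) = 0" by (rule add_left_imp_eq)
  then show ?thesis by (intro v_some2[OF assms]) simp_all
qed

lemma v_m1: assumes "valuation val" shows "val (-1) = Some 0"
proof -
  have a: "val ((-1)*(-1)) = Some (the (val (-1)) + the (val (-1)))" by (rule v_mult[OF assms]) simp_all
  have "Some (the (val (-1)) + the (val (-1))) = Some 0" using trans[OF sym[OF a[unfolded mult_minus1 minus_minus]] v_one[OF assms]] .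
  then have "the (val (-1)) + the (val (-1)) = 0" by (simp only: option.inject)
  then have "the (val (-1)) = 0" by (simp only: double_zero)
  then show ?thesis by (intro v_some2[OF assms]) simp_all
qed

lemma v_inv: assumes "valuation val" "a \<noteq> 0" shows "val (inverse a) = Some (- the (val a))"
proof -
  have a: "val (a * inverse a) = Some (the (val a) + the (val (inverse a)))" by (rule v_mult[OF assms(1)]) (simp_all add: assms(2))
  have "Some (the (val a) + the (val (inverse a))) = Some 0" using trans[OF sym[OF a[unfolded right_inverse[OF assms(2)]]] v_one[OF assms(1)]] .
  then have "the (val a) + the (val (inverse a)) = 0" by (simp only: option.inject)
  then have "the (val (inverse a)) = - the (val a)" by (simp add: eq_neg_iff_add_eq_0 add.commute)
  then show ?thesis using assms(2) by (intro v_some2[OF assms(1)]) simp_all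
qed

lemma res_zero: assumes "residue_map val \<pi>" shows "\<pi> 0 = 0"
proof -
  have "0 \<in> vring val" by (simp add: vring_def)
  then have "\<pi> (0+0) = \<pi> 0 + \<pi> 0" using assms unfolding residue_map_def by blast
  then have "\<pi> 0 + \<pi> 0 = \<pi> 0 + 0" by simp
  then show ?thesis by (rule add_left_imp_eq)
qed

lemma res_m1: assumes "residue_map val \<pi>" "valuation val" shows "\<pi> (-1) = -1"
proof -
  have a: "-1 \<in> vring val" "1 \<in> vring val" using v_m1[OF assms(2)] v_one[OF assms(2)] by (auto simp: vring_def)
  then have "\<pi> (1 + -1) = \<pi> 1 + \<pi> (-1)" using assms unfolding residue_map_def by blast
  then have "0 = 1 + \<pi> (-1)" using res_zero[OF assms(1)] assms(1) unfolding residue_map_def by simp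
  then show ?thesis by (simp add: eq_neg_iff_add_eq_0 add.commute)
qed

lemma lift_unit: assumes "residue_map val \<pi>" "valuation val" "c \<noteq> 0"
  shows "\<exists>u. u \<in> vring val \<and> val u = Some 0 \<and> \<pi> u = c"
proof -
  have "\<pi> ` vring val = UNIV" using assms(1) unfolding residue_map_def by (elim conjE)
  then have "c \<in> \<pi> ` vring val" by simp
  then obtain u where u: "u \<in> vring val" "\<pi> u = c" by (elim imageE) simp
  have "u \<noteq> 0" using u assms(3) res_zero[OF assms(1)] by auto
  moreover have "\<forall>x\<in>vring val. \<pi> x = 0 \<longleftrightarrow> (x = 0 \<or> 0 < the (val x))" using assms(1) unfolding residue_map_def by (elim conjE)
  then have "\<not> 0 < the (val u)" using u assms(3) by blast
  ultimately have "the (val u) = 0" using u(1) by (auto simp: vring_def)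
  then show ?thesis using u v_some2[OF assms(2) \<open>u \<noteq> 0\<close>] by blast
qed

lemma pa_mult: "pseudo_angular val \<pi> pan \<Longrightarrow> val u = Some 0 \<Longrightarrow> x \<noteq> 0 \<Longrightarrow> pan (u * x) = \<pi> u * pan x"
  unfolding pseudo_angular_def by blast
lemma pa_sq: "pseudo_angular val \<pi> pan \<Longrightarrow> a \<noteq> 0 \<Longrightarrow> u \<noteq> 0 \<Longrightarrow> \<exists>k. k \<noteq> 0 \<and> pan (a * u^2) = pan a * k^2"
  unfolding pseudo_angular_def by blast
lemma pa_add: "pseudo_angular val \<pi> pan \<Longrightarrow> x1 \<noteq> 0 \<Longrightarrow> x2 \<noteq> 0 \<Longrightarrow> x1 + x2 \<noteq> 0 \<Longrightarrow> val x1 = val x2 \<Longrightarrow> pan x1 + pan x2 \<noteq> 0 \<Longrightarrow>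
           val (x1 + x2) = val x1 \<and> pan (x1 + x2) = pan x1 + pan x2"
  unfolding pseudo_angular_def by blast
lemma res_mult: "residue_map val \<pi> \<Longrightarrow> x \<in> vring val \<Longrightarrow> y \<in> vring val \<Longrightarrow> \<pi> (x * y) = \<pi> x * \<pi> y"
  unfolding residue_map_def by blast

lemma ir_sub: "intermediate_ring val A \<Longrightarrow> x \<in> vring val \<Longrightarrow> x \<in> A"
  unfolding intermediate_ring_def by blast
lemma ir_mult: "intermediate_ring val A \<Longrightarrow> x \<in> A \<Longrightarrow> y \<in> A \<Longrightarrow> x * y \<in> A"
  unfolding intermediate_ring_def by blast
lemma qq_sq: "qq_module A M \<Longrightarrow> a \<in> A \<Longrightarrow> x \<in> M \<Longrightarrow> a^2 * x \<in> M"
  unfolding qq_module_def by blast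
lemma qq_add: "qq_module A M \<Longrightarrow> x \<in> M \<Longrightarrow> y \<in> M \<Longrightarrow> x + y \<in> M"
  unfolding qq_module_def by blast

lemma rescale:
  assumes hval: "valuation val" and hres: "residue_map val \<pi>" and hpan: "pseudo_angular val \<pi> pan"
    and hA: "intermediate_ring val A" and hM: "qq_module A M"
    and x: "x \<in> M" "x \<noteq> 0" "val x = Some g" and z: "z \<in> A" "z \<noteq> 0" "val z = Some d"
  shows "\<exists>y. y \<in> M \<and> y \<noteq> 0 \<and> val y = Some (g + d + d) \<and> pan y = pan x"
proof -
  obtain k where k: "k \<noteq> 0" "pan (x * z^2) = pan x * k^2" using pa_sq[OF hpan, of x z] x z by blast
  obtain u where u: "u \<in> vring val" "val u = Some 0" "\<pi> u = inverse k"
    using lift_unit[OF hres hval, of "inverse k"] k by auto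
  have u0: "u \<noteq> 0" using u(2) v_zero[OF hval, of u] by auto
  have uA: "u \<in> A" using ir_sub[OF hA u(1)] .
  have uzA: "u * z \<in> A" using ir_mult[OF hA uA z(1)] .
  define y where "y = (u*z)^2 * x"
  have yM: "y \<in> M" unfolding y_def using qq_sq[OF hM uzA x(1)] .
  have y0: "y \<noteq> 0" using u0 z x by (simp add: y_def)
  have vz2: "val (z*z) = Some (d + d)" using v_mult[OF hval] z by simp
  have vx2: "val (x * z^2) = Some (g + (d + d))" using v_mult[OF hval, of x "z*z"] x z vz2 by (simp add: power2_eq_square)
  have vu2: "val (u*u) = Some 0" using v_mult[OF hval] u u0 by simp
  have yeq: "y = (u*u) * (x * z^2)" by (simp add: y_def power2_eq_square algebra_simps)
  have xz0: "x * z^2 \<noteq> 0" using x z by simp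
  have "val y = Some (0 + (g + (d+d)))" unfolding yeq using v_mult[OF hval, of "u*u" "x*z^2"] vu2 vx2 u0 xz0 by simp
  then have vy: "val y = Some (g + d + d)" by (simp add: add.assoc)
  have "pan y = \<pi> (u*u) * pan (x * z^2)" unfolding yeq using pa_mult[OF hpan vu2 xz0] .
  also have "\<pi> (u*u) = \<pi> u * \<pi> u" using res_mult[OF hres u(1) u(1)] .
  finally have "pan y = pan x" using k u by (simp add: power2_eq_square field_simps)
  then show ?thesis using yM y0 vy by blast
qed

lemma rescale_sub:
  assumes hval: "valuation val" and hres: "residue_map val \<pi>" and hpan: "pseudo_angular val \<pi> pan"
    and hA: "intermediate_ring val A" and hM: "qq_module A M"
    and z: "z \<in> A" "z \<noteq> 0" "val z = Some d" and g: "g2 = g1 + d + d"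
  shows "Mg val pan M g1 \<subseteq> Mg val pan M g2"
proof
  fix c assume "c \<in> Mg val pan M g1"
  then consider "c = 0" | x where "x \<in> M" "x \<noteq> 0" "val x = Some g1" "c = pan x" unfolding Mg_def by blast
  then show "c \<in> Mg val pan M g2"
  proof cases
    case 1 then show ?thesis by (simp add: Mg_def)
  next
    case 2
    then obtain y where "y \<in> M \<and> y \<noteq> 0 \<and> val y = Some (g1 + d + d) \<and> pan y = pan x"
      using rescale[OF hval hres hpan hA hM _ _ _ z] by blast
    then have "y \<in> M \<and> y \<noteq> 0 \<and> val y = Some g2 \<and> c = pan y" using 2 g by simp
    then show ?thesis unfolding Mg_def by blast
  qed
qed

theorem mainTheorem5:
  fixes val :: "'k::field \<Rightarrow> 'g::linordered_ab_group_add option"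
    and \<pi> :: "'k \<Rightarrow> 'f::field"
    and pan :: "'k \<Rightarrow> 'f"
    and A M :: "'k set"
  assumes hval: "valuation val"
    and hres: "residue_map val \<pi>"
    and hsqrt: "\<forall>x. strict_unit val \<pi> x \<longrightarrow> (\<exists>y. y^2 = x)"
    and hpan: "pseudo_angular val \<pi> pan"
    and hA: "intermediate_ring val A"
    and hM: "qq_module A M"
  shows "(\<forall>g. qq_module (UNIV :: 'f set) (Mg val pan M g))
    \<and> (\<forall>g1 g2. g1 \<in> Hgrp val A \<union> {g. 0 \<le> g} \<longrightarrow> g2 \<in> Hgrp val A \<union> {g. 0 \<le> g} \<longrightarrow>
          same_class_mod_sq (Hgrp val A) g1 g2 \<longrightarrow> Mg val pan M g1 = Mg val pan M g2)
    \<and> (\<forall>g1 g2. g1 \<in> Hgrp val A \<union> {g. 0 \<le> g} \<longrightarrow> g2 \<in> Hgrp val A \<union> {g. 0 \<le> g} \<longrightarrow>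
          same_sq_class g1 g2 \<longrightarrow> g1 \<le> g2 \<longrightarrow> Mg val pan M g1 \<subseteq> Mg val pan M g2)"
proof (intro conjI allI impI)
  fix g
  show "qq_module (UNIV :: 'f set) (Mg val pan M g)"
    unfolding qq_module_def
  proof (intro conjI ballI)
    fix a b assume a: "a \<in> Mg val pan M g" and b: "b \<in> Mg val pan M g"
    show "a + b \<in> Mg val pan M g"
    proof (cases "a = 0 \<or> b = 0 \<or> a + b = 0")
      case True then show ?thesis using a b by (auto simp: Mg_def)
    next
      case False
      then obtain x y where x: "x \<in> M" "x \<noteq> 0" "val x = Some g" "a = pan x"
        and y: "y \<in> M" "y \<noteq> 0" "val y = Some g" "b = pan y" using a b unfolding Mg_def by blast
      have xy0: "x + y \<noteq> 0"
      proof
        assume "x + y = 0"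
        then have "y = (-1) * x" by (simp add: eq_neg_iff_add_eq_0 add.commute)
        then have "pan y = \<pi> (-1) * pan x" using pa_mult[OF hpan v_m1[OF hval] x(2)] by simp
        then have "b = - a" using res_m1[OF hres hval] x y by simp
        then show False using False by simp
      qed
      have "val (x + y) = val x \<and> pan (x + y) = pan x + pan y"
        using pa_add[OF hpan x(2) y(2) xy0] x y False by simp
      moreover have "x + y \<in> M" using qq_add[OF hM x(1) y(1)] .
      ultimately have "x + y \<in> M \<and> x + y \<noteq> 0 \<and> val (x+y) = Some g \<and> a + b = pan (x+y)"
        using x y xy0 by simp
      then show ?thesis unfolding Mg_def by blast
    qed
  next
    fix c a assume a: "a \<in> Mg val pan M g"
    show "c^2 * a \<in> Mg val pan M g"
    proof (cases "c = 0 \<or> a = 0")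
      case True then show ?thesis by (auto simp: Mg_def)
    next
      case False
      then obtain x where x: "x \<in> M" "x \<noteq> 0" "val x = Some g" "a = pan x" using a unfolding Mg_def by blast
      obtain u where u: "u \<in> vring val" "val u = Some 0" "\<pi> u = c"
        using lift_unit[OF hres hval, of c] False by auto
      have u0: "u \<noteq> 0" using u(2) v_zero[OF hval, of u] by auto
      have uA: "u \<in> A" using ir_sub[OF hA u(1)] .
      have yM: "u^2 * x \<in> M" using qq_sq[OF hM uA x(1)] .
      have vu2: "val (u*u) = Some 0" using v_mult[OF hval] u u0 by simp
      have "val (u^2 * x) = Some (0 + g)" using v_mult[OF hval, of "u*u" x] vu2 x u0
        by (simp add: power2_eq_square)
      moreover have "pan (u^2 * x) = \<pi> (u*u) * pan x" using pa_mult[OF hpan vu2 x(2)]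
        by (simp add: power2_eq_square)
      moreover have "\<pi> (u*u) = \<pi> u * \<pi> u" using res_mult[OF hres u(1) u(1)] .
      ultimately show ?thesis using yM x u u0 unfolding Mg_def
        by (auto simp: power2_eq_square intro!: exI[of _ "u^2*x"])
    qed
  qed simp
next
  fix g1 g2 :: 'g
  assume "same_class_mod_sq (Hgrp val A) g1 g2"
  then obtain h where h: "h \<in> Hgrp val A" "g1 - g2 = h + h" unfolding same_class_mod_sq_def by blast
  then obtain a where a: "a \<in> ring_units A" "h = the (val a)" unfolding Hgrp_def by blast
  have a0: "a \<noteq> 0" "a \<in> A" "inverse a \<in> A" "inverse a \<noteq> 0" using a unfolding ring_units_def by auto
  have va: "val a = Some h" using v_some2[OF hval a0(1)] a by simp
  have via: "val (inverse a) = Some (- h)" using v_inv[OF hval a0(1)] a by simp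
  show "Mg val pan M g1 = Mg val pan M g2"
  proof
    have e1: "g2 = g1 + - h + - h" using h(2) by (simp add: algebra_simps)
    show "Mg val pan M g1 \<subseteq> Mg val pan M g2"
      using rescale_sub[OF hval hres hpan hA hM a0(3,4) via e1] .
    have e2: "g1 = g2 + h + h" using h(2) by (simp add: algebra_simps)
    show "Mg val pan M g2 \<subseteq> Mg val pan M g1"
      using rescale_sub[OF hval hres hpan hA hM a0(2,1) va e2] .
  qed
next
  fix g1 g2 :: 'g
  assume "same_sq_class g1 g2" "g1 \<le> g2"
  then obtain h where h: "g1 - g2 = h + h" unfolding same_sq_class_def by blast
  have "h \<le> 0"
  proof (rule ccontr)
    assume "\<not> h \<le> 0" then have "0 < h" by (simp only: not_le)
    then have "0 < h + h" using add_pos_pos by blast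
    then have "0 < g1 - g2" using h by simp
    then have "g2 < g1" by simp
    then show False using \<open>g1 \<le> g2\<close> by simp
  qed
  obtain z where z: "val z = Some (- h)" using hval unfolding valuation_def by blast
  have z0: "z \<noteq> 0" using z v_zero[OF hval, of z] by auto
  have "z \<in> vring val" using z \<open>h \<le> 0\<close> unfolding vring_def by simp
  then have zA: "z \<in> A" using ir_sub[OF hA] by blast
  have e: "g2 = g1 + - h + - h" using h by (simp add: algebra_simps)
  show "Mg val pan M g1 \<subseteq> Mg val pan M g2"
    using rescale_sub[OF hval hres hpan hA hM zA z0 z e] .
qed

end
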